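(* Let $(G,\ell,\mathcal{C})$ be a triplet and let $C_1,C_2,\ldots,C_{q+1}\subseteq V(G)$ be pairwise disjoint vertex sets which pairwise have the same type in $(G,\ell,\mathcal{C})$. Let $\phi$ be an FO formula in prenex form having $q$ quantifiers. Then $G,\ell,\mathcal{C}\models\phi$ if and only if $G\setminus C_1,\ell,\mathcal{C}'\models\phi$, where $\mathcal{C}'$ is the restriction of $\mathcal{C}$ to $V(G)\setminus C_1$.
   Context: Graphs are finite and simple. There are vertex constants $u_1,u_2,\ldots$ and set constants $D_1,D_2,\ldots$, vertex variables $x_1,x_2,\ldots$ and set variables $X_1,X_2,\ldots$. A triplet $(G,\ell,\mathcal{C})$ consists of a graph $G$, a partial function $\ell$ (labeling) from vertex constants to $V(G)$, and a partial function $\mathcal{C}$ (coloring) from set constants to subsets of $V(G)$. MSO formulas are generated by $\phi\to\exists X.\phi\mid\exists x.\phi\mid\phi\lor\phi\mid\neg\phi\mid y\sim y\mid y=y\mid y\in Y$, where $y$ is a vertex variable or vertex constant and $Y$ a set variable or set constant; an FO formula is an MSO formula using no set variables. Semantics: $G,\ell,\mathcal{C}\models u_i\in D_j$ iff $\ell(u_i)$ is defined and $\ell(u_i)\in\mathcal{C}(D_j)$ (with $\mathcal{C}(D_j)$ defined); $u_i=u_j$ iff both are defined and $\ell(u_i)=\ell(u_j)$; $u_i\sim u_j$ iff both defined and $\ell(u_i)\ell(u_j)\in E(G)$; $\lor,\neg$ as usual; $G,\ell,\mathcal{C}\models\exists x_i.\phi$ iff there is $v\in V(G)$ such that $G,\ell',\mathcal{C}\models\phi[x_i\setminus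 u_i]$, where $\ell(u_i)$ is undefined, $\phi[x_i\setminus u_i]$ replaces every occurrence of $x_i$ by $u_i$, and $\ell'$ agrees with $\ell$ except $\ell'(u_i)=v$; similarly $G,\ell,\mathcal{C}\models\exists X_i.\phi$ iff there is $S\subseteq V(G)$ such that $G,\ell,\mathcal{C}'\models\phi[X_i\setminus D_i]$ where $\mathcal{C}(D_i)$ is undefined and $\mathcal{C}'$ agrees with $\mathcal{C}$ except $\mathcal{C}'(D_i)=S$. Otherwise the formula is not satisfied. Prenex form: all quantifiers at the beginning. An isomorphism between triplets $(G_1,\ell_1,\mathcal{C}_1)$ and $(G_2,\ell_2,\mathcal{C}_2)$ is a bijection $f:V(G_1)\to V(G_2)$ preserving adjacency and non-adjacency such that for every $u_i$ either both $\ell_1(u_i),\ell_2(u_i)$ are undefined or $f(\ell_1(u_i))=\ell_2(u_i)$, and for every $D_i$ either both $\mathcal{C}_1(D_i),\mathcal{C}_2(D_i)$ are undefined or $f(\mathcal{C}_1(D_i))=\mathcal{C}_2(D_i)$. Two sets $C_1,C_2\subseteq V(G)$ have the same type in $(G,\ell,\mathcal{C})$ if there is an isomorphism $f$ from $(G,\ell,\mathcal{C})$ to itself mapping elements of $C_1$ to $C_2$, elements of $C_2$ to $C_1$, and every vertex of $V(G)\setminus(C_1\cup C_2)$ to itself. The restriction of $\mathcal{C}$ to $V(G)\setminus C_1$ is the coloring $\mathcal{C}'$ with $\mathcal{C}'(D_i)=\mathcal{C}(D_i)\setminus C_1$ whenever $\mathcal{C}(D_i)$ is defined, and undefined otherwise.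 *)

theory Defs
  imports Main
begin

datatype vterm = VVar nat | VConst nat
datatype sterm = SVar nat | SConst nat

datatype fm =
    ExV nat fm
  | ExS nat fm
  | Or fm fm
  | Neg fm
  | Adj vterm vterm
  | Eq vterm vterm
  | Mem vterm sterm

fun map_fm :: "(vterm \<Rightarrow> vterm) \<Rightarrow> (sterm \<Rightarrow> sterm) \<Rightarrow> fm \<Rightarrow> fm" where
  "map_fm f g (ExV i p) = ExV i (map_fm f g p)"
| "map_fm f g (ExS i p) = ExS i (map_fm f g p)"
| "map_fm f g (Or p q) = Or (map_fm f g p) (map_fm f g q)"
| "map_fm f g (Neg p) = Neg (map_fm f g p)"
| "map_fm f g (Adj a b) = Adj (f a) (f b)"
| "map_fm f g (Eq a b) = Eq (f a) (f b)"
| "map_fm f g (Mem a S) = Mem (f a) (g S)"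

lemma size_map_fm[simp]: "size (map_fm f g p) = size p"
  by (induction p) auto

definition substV :: "nat \<Rightarrow> fm \<Rightarrow> fm" where
  "substV i = map_fm (\<lambda>t. if t = VVar i then VConst i else t) id"

definition substS :: "nat \<Rightarrow> fm \<Rightarrow> fm" where
  "substS i = map_fm id (\<lambda>t. if t = SVar i then SConst i else t)"

text \<open>A graph is given by a vertex set V and an adjacency relation E; a labeling is a
  partial function from (indices of) vertex constants to vertices, a coloring a partial
  function from (indices of) set constants to vertex sets.\<close>

function sat :: "'v set \<Rightarrow> ('v \<Rightarrow> 'v \<Rightarrow> bool) \<Rightarrow> (nat \<Rightarrow> 'v option)
    \<Rightarrow> (nat \<Rightarrow> 'v set option) \<Rightarrow> fm \<Rightarrow> bool" where
  "sat V E l C (ExV i p) =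
     (l i = None \<and> (\<exists>v\<in>V. sat V E (l(i := Some v)) C (substV i p)))"
| "sat V E l C (ExS i p) =
     (C i = None \<and> (\<exists>S. S \<subseteq> V \<and> sat V E l (C(i := Some S)) (substS i p)))"
| "sat V E l C (Or p q) = (sat V E l C p \<or> sat V E l C q)"
| "sat V E l C (Neg p) = (\<not> sat V E l C p)"
| "sat V E l C (Adj a b) =
     (case (a, b) of (VConst i, VConst j) \<Rightarrow>
        (case (l i, l j) of (Some v, Some w) \<Rightarrow> E v w | _ \<Rightarrow> False)
      | _ \<Rightarrow> False)"
| "sat V E l C (Eq a b) =
     (case (a, b) of (VConst i, VConst j) \<Rightarrow>
        (case (l i, l j) of (Some v, Some w) \<Rightarrow> v = w | _ \<Rightarrow> False)
      | _ \<Rightarrow> False)"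
| "sat V E l C (Mem a S) =
     (case (a, S) of (VConst i, SConst j) \<Rightarrow>
        (case (l i, C j) of (Some v, Some D) \<Rightarrow> v \<in> D | _ \<Rightarrow> False)
      | _ \<Rightarrow> False)"
  by pat_completeness auto
termination
  by (relation "measure (\<lambda>(V, E, l, C, p). size p)")
     (auto simp: substV_def substS_def)

fun no_setvar_vt :: "sterm \<Rightarrow> bool" where
  "no_setvar_vt (SVar _) = False"
| "no_setvar_vt (SConst _) = True"

fun is_FO :: "fm \<Rightarrow> bool" where
  "is_FO (ExV i p) = is_FO p"
| "is_FO (ExS i p) = False"
| "is_FO (Or p q) = (is_FO p \<and> is_FO q)"
| "is_FO (Neg p) = is_FO p"
| "is_FO (Adj a b) = True"
| "is_FO (Eq a b) = True"
| "is_FO (Mem a S) = no_setvar_vt S"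

fun qfree :: "fm \<Rightarrow> bool" where
  "qfree (ExV i p) = False"
| "qfree (ExS i p) = False"
| "qfree (Or p q) = (qfree p \<and> qfree q)"
| "qfree (Neg p) = qfree p"
| "qfree _ = True"

text \<open>Prenex form: a prefix of quantifiers (possibly interleaved with negations, as the
  grammar has no universal quantifier) followed by a quantifier-free matrix.\<close>
fun prenex :: "fm \<Rightarrow> bool" where
  "prenex (ExV i p) = prenex p"
| "prenex (ExS i p) = prenex p"
| "prenex (Neg p) = prenex p"
| "prenex p = qfree p"

fun nquant :: "fm \<Rightarrow> nat" where
  "nquant (ExV i p) = Suc (nquant p)"
| "nquant (ExS i p) = Suc (nquant p)"
| "nquant (Or p q) = nquant p + nquant q"
| "nquant (Neg p) = nquant p"
| "nquant _ = 0"

definition simple_graph :: "'v set \<Rightarrow> ('v \<Rightarrow> 'v \<Rightarrow> bool) \<Rightarrow> bool" where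
  "simple_graph V E \<longleftrightarrow> finite V \<and> (\<forall>x y. E x y \<longrightarrow> x \<in> V \<and> y \<in> V)
     \<and> (\<forall>x y. E x y \<longrightarrow> E y x) \<and> (\<forall>x. \<not> E x x)"

definition triplet :: "'v set \<Rightarrow> ('v \<Rightarrow> 'v \<Rightarrow> bool) \<Rightarrow> (nat \<Rightarrow> 'v option)
    \<Rightarrow> (nat \<Rightarrow> 'v set option) \<Rightarrow> bool" where
  "triplet V E l C \<longleftrightarrow> simple_graph V E
     \<and> (\<forall>i v. l i = Some v \<longrightarrow> v \<in> V) \<and> (\<forall>j S. C j = Some S \<longrightarrow> S \<subseteq> V)"

definition triplet_iso ::
  "('v \<Rightarrow> 'w) \<Rightarrow> 'v set \<Rightarrow> ('v \<Rightarrow> 'v \<Rightarrow> bool) \<Rightarrow> (nat \<Rightarrow> 'v option) \<Rightarrow> (nat \<Rightarrow> 'v set option)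
   \<Rightarrow> 'w set \<Rightarrow> ('w \<Rightarrow> 'w \<Rightarrow> bool) \<Rightarrow> (nat \<Rightarrow> 'w option) \<Rightarrow> (nat \<Rightarrow> 'w set option) \<Rightarrow> bool" where
  "triplet_iso f V1 E1 l1 C1 V2 E2 l2 C2 \<longleftrightarrow>
     bij_betw f V1 V2
   \<and> (\<forall>x\<in>V1. \<forall>y\<in>V1. E1 x y \<longleftrightarrow> E2 (f x) (f y))
   \<and> (\<forall>i. map_option f (l1 i) = l2 i)
   \<and> (\<forall>j. map_option (image f) (C1 j) = C2 j)"

definition same_type :: "'v set \<Rightarrow> ('v \<Rightarrow> 'v \<Rightarrow> bool) \<Rightarrow> (nat \<Rightarrow> 'v option)
    \<Rightarrow> (nat \<Rightarrow> 'v set option) \<Rightarrow> 'v set \<Rightarrow> 'v set \<Rightarrow> bool" where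
  "same_type V E l C A B \<longleftrightarrow> A \<subseteq> V \<and> B \<subseteq> V \<and>
     (\<exists>f. triplet_iso f V E l C V E l C
        \<and> (\<forall>x\<in>A. f x \<in> B) \<and> (\<forall>x\<in>B. f x \<in> A)
        \<and> (\<forall>x\<in>V - (A \<union> B). f x = x))"

definition del_edges :: "('v \<Rightarrow> 'v \<Rightarrow> bool) \<Rightarrow> 'v set \<Rightarrow> 'v \<Rightarrow> 'v \<Rightarrow> bool" where
  "del_edges E A = (\<lambda>x y. E x y \<and> x \<notin> A \<and> y \<notin> A)"

definition restrict_col :: "(nat \<Rightarrow> 'v set option) \<Rightarrow> 'v set \<Rightarrow> nat \<Rightarrow> 'v set option" where
  "restrict_col C A = (\<lambda>j. map_option (\<lambda>S. S - A) (C j))"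

end

theory Submission
  imports Defs
begin

lemma mf_qfree[simp]: "qfree (map_fm f g p) = qfree p"
  by (induction p) auto
lemma mf_prenex[simp]: "prenex (map_fm f g p) = prenex p"
  by (induction p) auto
lemma mf_nquant[simp]: "nquant (map_fm f g p) = nquant p"
  by (induction p) auto
lemma mf_FO[simp]: "is_FO (map_fm f id p) = is_FO p"
  by (induction p) auto
lemma substV_simps[simp]:
  "is_FO (substV i p) = is_FO p" "prenex (substV i p) = prenex p"
  "qfree (substV i p) = qfree p" "nquant (substV i p) = nquant p"
  by (auto simp: substV_def)

lemma qf_sat:
  assumes "qfree p" "\<forall>i v. l i = Some v \<longrightarrow> v \<notin> A"
  shows "sat V E l C p = sat (V - A) (del_edges E A) l (restrict_col C A) p"
  using assms
proof (induction p)
  case (Adj a b) then show ?case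
    by (auto simp: del_edges_def split: vterm.splits option.splits)
next
  case (Eq a b) then show ?case
    by (auto split: vterm.splits option.splits)
next
  case (Mem a S) then show ?case
    by (auto simp: restrict_col_def split: vterm.splits sterm.splits option.splits)
qed auto

lemma iso_upd:
  assumes "triplet_iso f V E l C V' E' l' C'"
  shows "triplet_iso f V E (l(i:=Some v)) C V' E' (l'(i:=Some (f v))) C'"
  using assms by (auto simp: triplet_iso_def)

lemma iso_sat:
  assumes "triplet_iso f V E l C V' E' l' C'" "\<forall>i v. l i = Some v \<longrightarrow> v\<in>V"
    "\<forall>j D. C j = Some D \<longrightarrow> D \<subseteq> V" "is_FO p"
  shows "sat V E l C p = sat V' E' l' C' p"
  using assms
proof (induction V E l C p arbitrary: l' rule: sat.induct)
  case (1 V E l C i p)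
  have bij: "bij_betw f V V'" and li: "map_option f (l i) = l' i"
    using 1(2) by (auto simp: triplet_iso_def)
  have eq: "sat V E (l(i \<mapsto> v)) C (substV i p) = sat V' E' (l'(i \<mapsto> f v)) C' (substV i p)"
    if "v \<in> V" for v
  proof -
    have "\<forall>ia va. (l(i \<mapsto> v)) ia = Some va \<longrightarrow> va \<in> V" using 1(3) that by auto
    then show ?thesis using 1(1)[OF that iso_upd[OF 1(2)]] 1(4,5) by (simp add: fun_upd_def)
  qed
  have "(\<exists>v\<in>V. sat V E (l(i \<mapsto> v)) C (substV i p)) =
        (\<exists>w\<in>V'. sat V' E' (l'(i \<mapsto> w)) C' (substV i p))"
  proof
    assume "\<exists>v\<in>V. sat V E (l(i \<mapsto> v)) C (substV i p)"
    then obtain v where "v \<in> V" "sat V E (l(i \<mapsto> v)) C (substV i p)" by blast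
    then show "\<exists>w\<in>V'. sat V' E' (l'(i \<mapsto> w)) C' (substV i p)"
      using eq bij bij_betwE by blast
  next
    assume "\<exists>w\<in>V'. sat V' E' (l'(i \<mapsto> w)) C' (substV i p)"
    then obtain w where w: "w \<in> V'" "sat V' E' (l'(i \<mapsto> w)) C' (substV i p)" by blast
    then obtain v where "v \<in> V" "w = f v" using bij by (metis bij_betw_imp_surj_on imageE)
    then show "\<exists>v\<in>V. sat V E (l(i \<mapsto> v)) C (substV i p)" using eq w by blast
  qed
  moreover have "(l i = None) = (l' i = None)" by (simp flip: li)
  ultimately show ?case by simp
next
  case (5 V E l C a b)
  have m: "\<And>i. l' i = map_option f (l i)" and EE: "\<forall>x\<in>V. \<forall>y\<in>V. E x y = E' (f x) (f y)"
    using 5(1) by (auto simp: triplet_iso_def)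
  show ?case
  proof (cases a; cases b)
    fix i j assume ab: "a = VConst i" "b = VConst j"
    show ?thesis using 5(2) EE unfolding ab m
      by (cases "l i"; cases "l j") auto
  qed (auto simp: m)
next
  case (6 V E l C a b)
  have m: "\<And>i. l' i = map_option f (l i)" and inj: "inj_on f V"
    using 6(1) by (auto simp: triplet_iso_def bij_betw_def)
  show ?case
  proof (cases a; cases b)
    fix i j assume ab: "a = VConst i" "b = VConst j"
    show ?thesis using 6(2) inj unfolding ab m
      by (cases "l i"; cases "l j") (auto dest: inj_onD)
  qed (auto simp: m)
next
  case (7 V E l C a S)
  have m: "\<And>i. l' i = map_option f (l i)" and inj: "inj_on f V"
    and c: "\<And>j. C' j = map_option (image f) (C j)"
    using 7(1) by (auto simp: triplet_iso_def bij_betw_def)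
  show ?case
  proof (cases a; cases S)
    fix i j assume ab: "a = VConst i" "S = SConst j"
    show ?thesis using 7(2,3) inj unfolding ab m c
      apply (cases "l i"; cases "C j")
         apply auto
      by (metis inj_onD subsetD)
  qed (auto simp: m)
qed auto

lemma same_type_upd:
  assumes "same_type V E l C A B" "v \<in> V" "v \<notin> A" "v \<notin> B"
  shows "same_type V E (l(i \<mapsto> v)) C A B"
proof -
  obtain f where f: "triplet_iso f V E l C V E l C" "\<forall>x\<in>A. f x \<in> B" "\<forall>x\<in>B. f x \<in> A"
    "\<forall>x\<in>V - (A \<union> B). f x = x" and AB: "A \<subseteq> V" "B \<subseteq> V"
    using assms(1) unfolding same_type_def by blast
  have "f v = v" using f(4) assms by blast
  then have "triplet_iso f V E (l(i \<mapsto> v)) C V E (l(i \<mapsto> v)) C"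
    using iso_upd[OF f(1), of i v] by simp
  then show ?thesis unfolding same_type_def using f AB by blast
qed

lemma main:
  "is_FO p \<Longrightarrow> prenex p \<Longrightarrow> finite (I::nat set) \<Longrightarrow> 1 \<in> I \<Longrightarrow> nquant p < card I \<Longrightarrow>
   \<forall>j\<in>I. Cs j \<subseteq> V \<Longrightarrow> \<forall>j\<in>I. \<forall>k\<in>I. j \<noteq> k \<longrightarrow> Cs j \<inter> Cs k = {} \<Longrightarrow>
   \<forall>j\<in>I. \<forall>k\<in>I. j \<noteq> k \<longrightarrow> same_type V E l C (Cs j) (Cs k) \<Longrightarrow>
   \<forall>i v. l i = Some v \<longrightarrow> v \<in> V \<and> (\<forall>j\<in>I. v \<notin> Cs j) \<Longrightarrow>
   \<forall>j D. C j = Some D \<longrightarrow> D \<subseteq> V \<Longrightarrow>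
   sat V E l C p = sat (V - Cs 1) (del_edges E (Cs 1)) l (restrict_col C (Cs 1)) p"
proof (induction V E l C p arbitrary: I rule: sat.induct)
  case (1 V E l C i p)
  define A where "A = Cs 1"
  define \<psi> where "\<psi> = substV i p"
  have claim: "sat V E (l(i \<mapsto> w)) C \<psi> = sat (V - A) (del_edges E A) (l(i \<mapsto> w)) (restrict_col C A) \<psi>"
    if w: "w \<in> V" "w \<notin> A" for w
  proof (cases "\<exists>j\<in>I. w \<in> Cs j")
    case True
    then obtain j where j: "j \<in> I" "w \<in> Cs j" by blast
    have j1: "j \<noteq> 1" using j w A_def by blast
    define I' where "I' = I - {j}"
    have cI': "card I' = card I - 1" using j(1) 1(4) unfolding I'_def by simp
    show ?thesis unfolding A_def \<psi>_def
    proof (rule 1(1)[OF w(1), of I'])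
      show "finite I'" "1 \<in> I'" using 1(4,5) j1 unfolding I'_def by auto
      show "nquant (substV i p) < card I'" using cI' 1(6) by simp
      show "\<forall>j\<in>I'. Cs j \<subseteq> V" "\<forall>j\<in>I'. \<forall>k\<in>I'. j \<noteq> k \<longrightarrow> Cs j \<inter> Cs k = {}"
        using 1(7,8) unfolding I'_def by auto
      have wn: "\<forall>k\<in>I'. w \<notin> Cs k" using 1(8) j unfolding I'_def by blast
      show "\<forall>ja\<in>I'. \<forall>k\<in>I'. ja \<noteq> k \<longrightarrow> same_type V E (l(i \<mapsto> w)) C (Cs ja) (Cs k)"
        using 1(9) wn w(1) same_type_upd unfolding I'_def by (metis DiffD1)
      show "\<forall>ia v. (l(i \<mapsto> w)) ia = Some v \<longrightarrow> v \<in> V \<and> (\<forall>j\<in>I'. v \<notin> Cs j)"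
        using 1(10) wn w(1) unfolding I'_def by auto
    qed (use 1(2,3,11) in auto)
  next
    case False
    show ?thesis unfolding A_def \<psi>_def
    proof (rule 1(1)[OF w(1), of I])
      show "\<forall>ja\<in>I. \<forall>k\<in>I. ja \<noteq> k \<longrightarrow> same_type V E (l(i \<mapsto> w)) C (Cs ja) (Cs k)"
        using 1(9) False w(1) same_type_upd by metis
      show "\<forall>ia v. (l(i \<mapsto> w)) ia = Some v \<longrightarrow> v \<in> V \<and> (\<forall>j\<in>I. v \<notin> Cs j)"
        using 1(10) False w(1) by auto
    qed (use 1(2-8,11) in auto)
  qed
  have "(\<exists>v\<in>V. sat V E (l(i \<mapsto> v)) C \<psi>) = (\<exists>v\<in>V - A. sat (V - A) (del_edges E A) (l(i \<mapsto> v)) (restrict_col C A) \<psi>)"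
  proof
    assume "\<exists>v\<in>V. sat V E (l(i \<mapsto> v)) C \<psi>"
    then obtain v where v: "v \<in> V" "sat V E (l(i \<mapsto> v)) C \<psi>" by blast
    show "\<exists>v\<in>V - A. sat (V - A) (del_edges E A) (l(i \<mapsto> v)) (restrict_col C A) \<psi>"
    proof (cases "v \<in> A")
      case False then show ?thesis using claim v by blast
    next
      case True
      obtain j where j: "j \<in> I" "j \<noteq> 1"
      proof (rule ccontr)
        assume "\<not> thesis"
        then have "I \<subseteq> {1}" using that by blast
        then have "card I \<le> card {1::nat}" by (intro card_mono) simp_all
        then show False using 1(6) by simp
      qed
      have st: "same_type V E l C A (Cs j)" using 1(5,9) j A_def by metis
      obtain f where f: "triplet_iso f V E l C V E l C" "\<forall>x\<in>A. f x \<in> Cs j"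
        using st unfolding same_type_def by blast
      have fv: "f v \<in> Cs j" using f(2) True by blast
      have fvV: "f v \<in> V" "f v \<notin> A" using fv 1(7,8) j 1(5) A_def by blast+
      have "sat V E (l(i \<mapsto> f v)) C \<psi>"
        using iso_sat[OF iso_upd[OF f(1), of i v]] v 1(2,10,11) unfolding \<psi>_def by auto
      then show ?thesis using claim fvV by blast
    qed
  next
    assume "\<exists>v\<in>V - A. sat (V - A) (del_edges E A) (l(i \<mapsto> v)) (restrict_col C A) \<psi>"
    then show "\<exists>v\<in>V. sat V E (l(i \<mapsto> v)) C \<psi>" using claim by blast
  qed
  then show ?case unfolding A_def \<psi>_def by simp
next
  case (2 V E l C i p) then show ?case by simp
next
  case (3 V E l C p q)
  then show ?case by (intro qf_sat) auto
next
  case (4 V E l C p) then show ?case by simp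
next
  case (5 V E l C a b) then show ?case by (intro qf_sat) auto
next
  case (6 V E l C a b) then show ?case by (intro qf_sat) auto
next
  case (7 V E l C a b) then show ?case by (intro qf_sat) auto
qed

theorem lemma12:
  fixes V :: "'v set" and E :: "'v \<Rightarrow> 'v \<Rightarrow> bool"
    and l :: "nat \<Rightarrow> 'v option" and C :: "nat \<Rightarrow> 'v set option"
    and Cs :: "nat \<Rightarrow> 'v set" and q :: nat and \<phi> :: fm
  assumes trip: "triplet V E l C"
    and sub: "\<forall>i\<in>{1..q+1}. Cs i \<subseteq> V"
    and disj: "\<forall>i\<in>{1..q+1}. \<forall>j\<in>{1..q+1}. i \<noteq> j \<longrightarrow> Cs i \<inter> Cs j = {}"
    and types: "\<forall>i\<in>{1..q+1}. \<forall>j\<in>{1..q+1}. i \<noteq> j \<longrightarrow> same_type V E l C (Cs i) (Cs j)"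
    and lab: "\<forall>i v. l i = Some v \<longrightarrow> v \<notin> Cs 1"
    and FO: "is_FO \<phi>" and pre: "prenex \<phi>" and nq: "nquant \<phi> = q"
  shows "sat V E l C \<phi> \<longleftrightarrow> sat (V - Cs 1) (del_edges E (Cs 1)) l (restrict_col C (Cs 1)) \<phi>"
proof (rule main)
  show "finite {1..q+1}" "1 \<in> {1..q+1}" "nquant \<phi> < card {1..q+1}" using nq by auto
  have lV: "\<forall>i v. l i = Some v \<longrightarrow> v \<in> V" and cV: "\<forall>j D. C j = Some D \<longrightarrow> D \<subseteq> V"
    using trip unfolding triplet_def by auto
  then show "\<forall>j D. C j = Some D \<longrightarrow> D \<subseteq> V" by blast
  have "v \<notin> Cs j" if "l k = Some v" "j \<in> {1..q+1}" for k v j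
  proof (cases "j = 1")
    case True then show ?thesis using lab that by blast
  next
    case False
    then have "same_type V E l C (Cs j) (Cs 1)" using types that(2) by auto
    then obtain f where f: "triplet_iso f V E l C V E l C" "\<forall>x\<in>Cs j. f x \<in> Cs 1"
      unfolding same_type_def by blast
    have "map_option f (l k) = l k" using f(1) unfolding triplet_iso_def by blast
    then have "f v = v" using that(1) by simp
    then show ?thesis using f(2) lab that(1) by metis
  qed
  then show "\<forall>i v. l i = Some v \<longrightarrow> v \<in> V \<and> (\<forall>j\<in>{1..q+1}. v \<notin> Cs j)"
    using lV by blast
qed (use assms in auto)

end
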